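(* For $l,m,n,u,v\in\mathbb{N}$, \[ \sum_{k=-\infty}^\infty (-1)^k\binom{l+m}{l+k}\binom{m+n}{m+k}\binom{n+l}{n+k}\binom{2u}{u+k} =\frac{(2u)!}{u!}\sum_{k=0}^{\infty} \frac{(l+m+n-k)!}{k!\,(l-k)!\,(m-k)!\,(n-k)!\,(u+k)!}, \] and \[ \sum_{k=-\infty}^\infty (-1)^k\binom{m+n}{m+k}\binom{m+n}{n+k}\binom{u+v}{u+k}\binom{u+v}{v+k} =\binom{u+v}{u}\sum_{k=0}^{\infty} \frac{(m+n)!\,(u+v+k)!}{k!\,(m-k)!\,(n-k)!\,(u+k)!\,(v+k)!}. \]
   Context: Convention: $1/j!=0$ for negative integers $j$, and binomial coefficients $\binom{a}{b}$ with $b<0$ or $b>a$ are $0$. *)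

theory Defs
  imports "HOL-Analysis.Analysis"
begin

definition binomz :: "nat \<Rightarrow> int \<Rightarrow> real" where
  "binomz a b = (if b < 0 then 0 else real (a choose nat b))"

definition inv_fact :: "int \<Rightarrow> real" where
  "inv_fact j = (if j < 0 then 0 else 1 / fact (nat j))"

end

theory Submission
  imports Defs
begin


lemma inv_fact_nat[simp]: "inv_fact (int n) = 1 / fact n"
  by (simp add: inv_fact_def)

lemma inv_fact_add[simp]: "inv_fact (int a + int b) = 1 / fact (a + b)"
  by (metis inv_fact_nat of_nat_add)

lemma inv_fact_neg[simp]: "j < 0 \<Longrightarrow> inv_fact j = 0"
  by (simp add: inv_fact_def)

lemma inv_fact_diff: "b \<le> a \<Longrightarrow> inv_fact (int a - int b) = 1 / fact (a - b)"
  by (simp add: inv_fact_def of_nat_diff[symmetric] del: of_nat_diff)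

lemma inv_fact_diff0: "a < b \<Longrightarrow> inv_fact (int a - int b) = 0"
  by (simp add: inv_fact_def)

lemma GV:
  fixes A B d M :: nat
  assumes "B \<le> M"
  shows "(\<Sum>s\<le>M. inv_fact (int A - int s) * inv_fact (int B - int s) * inv_fact (int s)
            * inv_fact (int d + int s)) = fact (A+B+d) / (fact A * fact B * fact (A+d) * fact (B+d))"
proof -
  let ?t = "\<lambda>s. inv_fact (int A - int s) * inv_fact (int B - int s) * inv_fact (int s)
            * inv_fact (int d + int s)"
  have "(\<Sum>s\<le>M. ?t s) = (\<Sum>s\<le>B. ?t s)"
    using assms by (intro sum.mono_neutral_right) (auto simp: inv_fact_diff0)
  also have "\<dots> = (\<Sum>s\<le>B. real (A choose s) * real ((B+d) choose (B-s)) / (fact A * fact (B+d)))"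
  proof (intro sum.cong refl)
    fix s assume s: "s \<in> {..B}"
    show "?t s = real (A choose s) * real ((B+d) choose (B-s)) / (fact A * fact (B+d))"
    proof (cases "s \<le> A")
      case True
      have e: "B + d - (B - s) = d + s" using s by auto
      show ?thesis using True s
        by (simp add: inv_fact_diff binomial_fact e field_simps del: of_nat_add)
    next
      case False
      then show ?thesis by (simp add: inv_fact_diff0)
    qed
  qed
  also have "\<dots> = real (\<Sum>s\<le>B. (A choose s) * ((B+d) choose (B-s))) / (fact A * fact (B+d))"
    by (simp add: sum_divide_distrib)
  also have "\<dots> = real ((A+B+d) choose B) / (fact A * fact (B+d))"
    by (simp add: vandermonde add.assoc)
  also have "\<dots> = fact (A+B+d) / (fact A * fact B * fact (A+d) * fact (B+d))"
  proof -
    have e: "A + B + d - B = A + d" by simp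
    show ?thesis by (simp add: binomial_fact e field_simps)
  qed
  finally show ?thesis .
qed

definition phi :: "nat \<Rightarrow> int \<Rightarrow> real" where
  "phi a k = inv_fact (int a + k) * inv_fact (int a - k)"

lemma phi_sym: "phi a (-k) = phi a k"
  by (simp add: phi_def)

lemma phi_zero: "int a < \<bar>k\<bar> \<Longrightarrow> phi a k = 0"
  by (simp add: phi_def abs_if split: if_splits)

lemma P_nat:
  fixes a b M kk :: nat
  assumes "b \<le> M"
  shows "phi a (int kk) * phi b (int kk) =
     (\<Sum>j\<le>M. phi j (int kk) * inv_fact (int a - int j) * inv_fact (int b - int j)) / fact (a+b)"
proof (cases "kk \<le> a \<and> kk \<le> b")
  case False
  have ab: "a < kk \<or> b < kk" using False by linarith
  have "phi a (int kk) * phi b (int kk) = 0"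
    using ab by (elim disjE) (simp_all add: phi_zero)
  moreover have "(\<Sum>j\<le>M. phi j (int kk) * inv_fact (int a - int j) * inv_fact (int b - int j)) = 0"
  proof (intro sum.neutral ballI)
    fix j assume "j \<in> {..M}"
    show "phi j (int kk) * inv_fact (int a - int j) * inv_fact (int b - int j) = 0"
    proof (cases "j < kk")
      case True then show ?thesis by (simp add: phi_zero)
    next
      case False2: False
      then have "a < j \<or> b < j" using ab by linarith
      then show ?thesis by (elim disjE) (simp_all add: inv_fact_diff0)
    qed
  qed
  ultimately show ?thesis by simp
next
  case True
  let ?f = "\<lambda>j. phi j (int kk) * inv_fact (int a - int j) * inv_fact (int b - int j)"
  define A where "A = a - kk"
  define B where "B = b - kk"
  have kM: "kk \<le> M" using True assms by simp
  have "(\<Sum>j\<le>M. ?f j) = (\<Sum>j\<in>{kk..M}. ?f j)"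
    by (intro sum.mono_neutral_right) (auto simp: phi_zero)
  also have "\<dots> = (\<Sum>j\<in>{0+kk..(M-kk)+kk}. ?f j)" using kM by simp
  also have "\<dots> = (\<Sum>s\<in>{0..M-kk}. ?f (s + kk))"
    by (rule sum.shift_bounds_cl_nat_ivl)
  also have "\<dots> = (\<Sum>s\<le>M-kk. inv_fact (int A - int s) * inv_fact (int B - int s) * inv_fact (int s)
            * inv_fact (int (2*kk) + int s))"
  proof (intro sum.cong)
    show "{0..M-kk} = {..M-kk}" by auto
  next
    fix s assume "s \<in> {..M-kk}"
    have e1: "int a - int (s + kk) = int A - int s" using True by (simp add: A_def)
    have e2: "int b - int (s + kk) = int B - int s" using True by (simp add: B_def)
    have e3: "int (s + kk) + int kk = int (2*kk) + int s" by simp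
    have e4: "int (s + kk) - int kk = int s" by simp
    show "?f (s + kk) = inv_fact (int A - int s) * inv_fact (int B - int s) * inv_fact (int s)
            * inv_fact (int (2*kk) + int s)"
      unfolding phi_def e1 e2 e3 e4 by (simp only: mult_ac)
  qed
  also have "\<dots> = fact (A+B+2*kk) / (fact A * fact B * fact (A+2*kk) * fact (B+2*kk))"
    by (rule GV) (use assms in \<open>simp add: B_def\<close>)
  finally have "(\<Sum>j\<le>M. ?f j) = fact (A+B+2*kk) / (fact A * fact B * fact (A+2*kk) * fact (B+2*kk))" .
  moreover have "A+B+2*kk = a+b" "A+2*kk = a+kk" "B+2*kk = b+kk" using True by (auto simp: A_def B_def)
  ultimately have S: "(\<Sum>j\<le>M. ?f j) = fact (a+b) / (fact A * fact B * fact (a+kk) * fact (b+kk))"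
    by simp
  have "phi a (int kk) * phi b (int kk) = 1 / (fact (a+kk) * fact A * fact (b+kk) * fact B)"
    using True by (simp add: phi_def inv_fact_diff A_def B_def)
  then show ?thesis unfolding S by (simp add: field_simps)
qed

lemma P:
  fixes a b M :: nat and k :: int
  assumes "b \<le> M"
  shows "phi a k * phi b k =
     (\<Sum>j\<le>M. phi j k * inv_fact (int a - int j) * inv_fact (int b - int j)) / fact (a+b)"
proof (cases "k \<ge> 0")
  case True
  define kk where "kk = nat k"
  have kk: "k = int kk" using True by (simp add: kk_def)
  show ?thesis unfolding kk by (rule P_nat[OF assms])
next
  case False
  define kk where "kk = nat (- k)"
  have kk: "k = - int kk" using False by (simp add: kk_def)
  have "phi j k = phi j (int kk)" for j unfolding kk by (rule phi_sym)
  then show ?thesis using P_nat[OF assms, of a kk] by simp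
qed


lemma powi_m1_diff: "(-1::real) powi (int i - int j) = (-1)^i * (-1)^j"
  by (cases "even j") (auto simp: power_int_diff)

lemma altsum:
  fixes j N :: nat
  assumes "j \<le> N"
  shows "(\<Sum>k\<in>{-int N..int N}. (-1::real) powi k * phi j k) = (if j = 0 then 1 else 0)"
proof -
  have "(\<Sum>k\<in>{-int N..int N}. (-1::real) powi k * phi j k) = (\<Sum>k\<in>{-int j..int j}. (-1::real) powi k * phi j k)"
    using assms by (intro sum.mono_neutral_right) (auto simp: phi_zero)
  also have "{-int j..int j} = (\<lambda>i. int i - int j) ` {..2*j}"
  proof (rule set_eqI, rule iffI)
    fix x assume "x \<in> {-int j..int j}"
    then show "x \<in> (\<lambda>i. int i - int j) ` {..2*j}"
      by (intro image_eqI[of _ _ "nat (x + int j)"]) auto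
  qed auto
  also have "(\<Sum>k\<in>(\<lambda>i. int i - int j) ` {..2*j}. (-1::real) powi k * phi j k)
     = (\<Sum>i\<le>2*j. (-1::real) powi (int i - int j) * phi j (int i - int j))"
    by (subst sum.reindex) (auto simp: inj_on_def)
  also have "\<dots> = (\<Sum>i\<le>2*j. (-1)^j / fact (2*j) * ((-1)^i * real ((2*j) choose i)))"
  proof (intro sum.cong refl)
    fix i assume i: "i \<in> {..2*j}"
    have e1: "int j + (int i - int j) = int i" by simp
    have e2: "int j - (int i - int j) = int (2*j) - int i" by simp
    have "phi j (int i - int j) = 1 / (fact i * fact (2*j - i))"
    proof -
      have e3: "inv_fact (int (2*j) - int i) = 1 / fact (2*j-i)" using i by (intro inv_fact_diff) auto
      show ?thesis unfolding phi_def e1 e2 e3 by simp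
    qed
    then show "(-1::real) powi (int i - int j) * phi j (int i - int j) = (-1)^j / fact (2*j) * ((-1)^i * real ((2*j) choose i))"
      using i by (simp add: powi_m1_diff binomial_fact)
  qed
  also have "\<dots> = (-1)^j / fact (2*j) * (\<Sum>i\<le>2*j. (-1)^i * real ((2*j) choose i))"
    by (simp add: sum_distrib_left)
  also have "\<dots> = (if j = 0 then 1 else 0)"
    using choose_alternating_sum[of "2*j", where 'a=real] by auto
  finally show ?thesis .
qed

lemma Bsum:
  fixes i u N :: nat
  assumes "i \<le> N" "u \<le> N"
  shows "(\<Sum>k\<in>{-int N..int N}. (-1::real) powi k * (phi i k * phi u k)) = 1 / (fact i * fact u * fact (i+u))"
proof -
  let ?K = "{-int N..int N}"
  let ?c = "\<lambda>t. inv_fact (int i - int t) * inv_fact (int u - int t)"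
  have "(\<Sum>k\<in>?K. (-1::real) powi k * (phi i k * phi u k))
      = (\<Sum>k\<in>?K. (-1::real) powi k * ((\<Sum>t\<le>N. phi t k * ?c t) / fact (i+u)))"
    using P[OF assms(2), of i] by (simp add: mult.assoc)
  also have "\<dots> = (\<Sum>t\<le>N. ?c t * (\<Sum>k\<in>?K. (-1::real) powi k * phi t k)) / fact (i+u)"
    by (simp add: sum_divide_distrib sum_distrib_left sum_distrib_right mult_ac sum.swap[of _ ?K])
  also have "\<dots> = (\<Sum>t\<le>N. ?c t * (if t = 0 then 1 else 0)) / fact (i+u)"
    by (simp add: altsum)
  also have "\<dots> = ?c 0 / fact (i+u)"
    by (simp add: sum.delta'[unfolded if_distrib] if_distrib cong: if_cong)
  also have "\<dots> = 1 / (fact i * fact u * fact (i+u))" by simp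
  finally show ?thesis .
qed



lemma binomz_eq: "binomz (a+b) (int a + k) = fact (a+b) * inv_fact (int a + k) * inv_fact (int b - k)"
proof (cases "int a + k < 0")
  case True then show ?thesis by (simp add: binomz_def)
next
  case False
  define t where "t = nat (int a + k)"
  have t: "int a + k = int t" using False by (simp add: t_def)
  have b1: "binomz (a+b) (int a + k) = real ((a+b) choose t)"
    using False by (simp add: binomz_def t_def)
  have i1: "inv_fact (int a + k) = 1 / fact t" unfolding t by (rule inv_fact_nat)
  show ?thesis
  proof (cases "t \<le> a + b")
    case True
    have e: "int b - k = int (a + b - t)" using True t by linarith
    have i2: "inv_fact (int b - k) = 1 / fact (a + b - t)" unfolding e by (rule inv_fact_nat)
    show ?thesis unfolding b1 i1 i2 binomial_fact[OF True] by simp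
  next
    case False2: False
    have "int b - k < 0" using False2 t by linarith
    then have i2: "inv_fact (int b - k) = 0" by simp
    have "(a+b) choose t = 0" using False2 by simp
    then show ?thesis unfolding b1 i2 by simp
  qed
qed

lemma swap_gen:
  fixes p h :: "int \<Rightarrow> real" and g :: "nat \<Rightarrow> int \<Rightarrow> real"
  shows "(\<Sum>k\<in>K. p k * ((\<Sum>j\<in>J. g j k * w j) * h k)) = (\<Sum>j\<in>J. w j * (\<Sum>k\<in>K. p k * (g j k * h k)))"
proof -
  have "(\<Sum>k\<in>K. p k * ((\<Sum>j\<in>J. g j k * w j) * h k)) = (\<Sum>k\<in>K. \<Sum>j\<in>J. w j * (p k * (g j k * h k)))"
    by (simp add: sum_distrib_left sum_distrib_right mult_ac)
  also have "\<dots> = (\<Sum>j\<in>J. \<Sum>k\<in>K. w j * (p k * (g j k * h k)))"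
    by (rule sum.swap)
  also have "\<dots> = (\<Sum>j\<in>J. w j * (\<Sum>k\<in>K. p k * (g j k * h k)))"
    by (simp add: sum_distrib_left)
  finally show ?thesis .
qed

lemma V1:
  fixes l m n i N :: nat
  assumes "l \<le> N" "m \<le> N"
  shows "(\<Sum>j\<le>N. inv_fact (int l - int j) * inv_fact (int m - int j) * inv_fact (int j - int i) / fact (j+n))
    = fact (nat (int (l+m+n) - int i)) * inv_fact (int l - int i) * inv_fact (int m - int i) / (fact (l+n) * fact (m+n))"
proof (cases "i \<le> l \<and> i \<le> m")
  case False
  have "(\<Sum>j\<le>N. inv_fact (int l - int j) * inv_fact (int m - int j) * inv_fact (int j - int i) / fact (j+n)) = 0"
  proof (intro sum.neutral ballI)
    fix j assume "j \<in> {..N}"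
    show "inv_fact (int l - int j) * inv_fact (int m - int j) * inv_fact (int j - int i) / fact (j+n) = 0"
    proof (cases "j < i")
      case True then show ?thesis by (simp add: inv_fact_diff0)
    next
      case False2: False
      then show ?thesis using False by (auto simp: inv_fact_diff0)
    qed
  qed
  moreover have "inv_fact (int l - int i) * inv_fact (int m - int i) = 0"
    using False by (auto simp: inv_fact_diff0)
  ultimately show ?thesis by simp
next
  case True
  let ?f = "\<lambda>j. inv_fact (int l - int j) * inv_fact (int m - int j) * inv_fact (int j - int i) / fact (j+n)"
  define A where "A = l - i"
  define B where "B = m - i"
  have iN: "i \<le> N" using True assms by simp
  have "(\<Sum>j\<le>N. ?f j) = (\<Sum>j\<in>{i..N}. ?f j)"
    by (intro sum.mono_neutral_right) (auto simp: inv_fact_diff0)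
  also have "\<dots> = (\<Sum>j\<in>{0+i..(N-i)+i}. ?f j)" using iN by simp
  also have "\<dots> = (\<Sum>s\<in>{0..N-i}. ?f (s + i))"
    by (rule sum.shift_bounds_cl_nat_ivl)
  also have "\<dots> = (\<Sum>s\<le>N-i. inv_fact (int A - int s) * inv_fact (int B - int s) * inv_fact (int s)
            * inv_fact (int (n+i) + int s))"
  proof (intro sum.cong)
    show "{0..N-i} = {..N-i}" by auto
  next
    fix s assume "s \<in> {..N-i}"
    have e1: "int l - int (s + i) = int A - int s" using True by (simp add: A_def)
    have e2: "int m - int (s + i) = int B - int s" using True by (simp add: B_def)
    have e3': "int (n+i) + int s = int (s+i+n)" by simp
    have e3: "inv_fact (int (n+i) + int s) = 1 / fact (s + i + n)" by (subst e3') (rule inv_fact_nat)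
    have e4: "int (s + i) - int i = int s" by simp
    show "?f (s + i) = inv_fact (int A - int s) * inv_fact (int B - int s) * inv_fact (int s)
            * inv_fact (int (n+i) + int s)"
      unfolding e1 e2 e3 e4 by simp
  qed
  also have "\<dots> = fact (A+B+(n+i)) / (fact A * fact B * fact (A+(n+i)) * fact (B+(n+i)))"
    by (rule GV) (use assms in \<open>simp add: B_def\<close>)
  finally have S: "(\<Sum>j\<le>N. ?f j) = fact (A+B+(n+i)) / (fact A * fact B * fact (A+(n+i)) * fact (B+(n+i)))" .
  have e: "A+B+(n+i) = nat (int (l+m+n) - int i)" "A+(n+i) = l+n" "B+(n+i) = m+n"
    using True by (auto simp: A_def B_def)
  show ?thesis unfolding S e using True by (simp add: inv_fact_diff A_def B_def)
qed



lemma infsum_int_fin: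
  fixes f :: "int \<Rightarrow> real"
  assumes "\<And>k. k \<notin> {-int N..int N} \<Longrightarrow> f k = 0"
  shows "infsum f UNIV = (\<Sum>k\<in>{-int N..int N}. f k)"
proof -
  have "infsum f UNIV = infsum f {-int N..int N}"
    by (rule infsum_cong_neutral) (use assms in auto)
  then show ?thesis by simp
qed

lemma infsum_nat_fin:
  fixes f :: "nat \<Rightarrow> real"
  assumes "\<And>k. N < k \<Longrightarrow> f k = 0"
  shows "infsum f UNIV = (\<Sum>k\<le>N. f k)"
proof -
  have "infsum f UNIV = infsum f {..N}"
    by (rule infsum_cong_neutral) (use assms in auto)
  then show ?thesis by simp
qed

lemma part1:
  fixes l m n u :: nat
  shows "(\<Sum>\<^sub>\<infinity>k::int. (-1::real) powi k * binomz (l+m) (int l + k) * binomz (m+n) (int m + k)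
            * binomz (n+l) (int n + k) * binomz (2*u) (int u + k))
         = fact (2*u) / fact u *
           (\<Sum>\<^sub>\<infinity>k::nat. fact (nat (int (l+m+n) - int k)) * inv_fact (int k) * inv_fact (int l - int k)
              * inv_fact (int m - int k) * inv_fact (int n - int k) * inv_fact (int u + int k))"
proof -
  define N where "N = l+m+n+u"
  define K where "K = {-int N..int N}"
  define C1 :: real where "C1 = fact (l+m) * fact (m+n) * fact (n+l) * fact (u+u)"
  define a where "a = (\<lambda>j::nat. inv_fact (int l - int j) * inv_fact (int m - int j))"
  define c where "c = (\<lambda>j i::nat. inv_fact (int j - int i) * inv_fact (int n - int i))"
  have pt: "(-1::real) powi k * binomz (l+m) (int l + k) * binomz (m+n) (int m + k)
            * binomz (n+l) (int n + k) * binomz (2*u) (int u + k)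
        = C1 * ((-1::real) powi k * (phi l k * phi m k * phi n k * phi u k))" for k
  proof -
    have e: "2*u = u+u" by simp
    show ?thesis unfolding e binomz_eq C1_def phi_def by (simp only: mult_ac)
  qed
  have L: "(\<Sum>\<^sub>\<infinity>k::int. (-1::real) powi k * binomz (l+m) (int l + k) * binomz (m+n) (int m + k)
            * binomz (n+l) (int n + k) * binomz (2*u) (int u + k))
       = (\<Sum>k\<in>K. C1 * ((-1::real) powi k * (phi l k * phi m k * phi n k * phi u k)))"
    unfolding pt K_def
    by (rule infsum_int_fin) (auto simp: phi_zero N_def)
  have inner: "(\<Sum>k\<in>K. (-1::real) powi k * (phi j k * (phi n k * phi u k)))
      = (\<Sum>i\<le>N. c j i / fact (j+n) * (1 / (fact i * fact u * fact (i+u))))" if j: "j \<le> N" for j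
  proof -
    have "(\<Sum>k\<in>K. (-1::real) powi k * (phi j k * (phi n k * phi u k)))
       = (\<Sum>k\<in>K. (-1::real) powi k * ((\<Sum>i\<le>N. phi i k * (c j i / fact (j+n))) * phi u k))"
    proof (intro sum.cong refl)
      fix k
      have "phi j k * phi n k = (\<Sum>i\<le>N. phi i k * (c j i / fact (j+n)))"
      proof -
        have nN: "n \<le> N" by (simp add: N_def)
        show ?thesis unfolding P[OF nN, where a=j and k=k]
        by (simp add: N_def sum_divide_distrib c_def mult.assoc)
      qed
      then show "(-1::real) powi k * (phi j k * (phi n k * phi u k)) = (-1::real) powi k * ((\<Sum>i\<le>N. phi i k * (c j i / fact (j+n))) * phi u k)"
        by (simp add: mult.assoc[symmetric])
    qed
    also have "\<dots> = (\<Sum>i\<le>N. c j i / fact (j+n) * (\<Sum>k\<in>K. (-1::real) powi k * (phi i k * phi u k)))"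
      by (rule swap_gen)
    also have "\<dots> = (\<Sum>i\<le>N. c j i / fact (j+n) * (1 / (fact i * fact u * fact (i+u))))"
    proof (intro sum.cong refl)
      fix i assume "i \<in> {..N}"
      then have "(\<Sum>k\<in>K. (-1::real) powi k * (phi i k * phi u k)) = 1 / (fact i * fact u * fact (i+u))"
        unfolding K_def by (intro Bsum) (auto simp: N_def)
      then show "c j i / fact (j+n) * (\<Sum>k\<in>K. (-1::real) powi k * (phi i k * phi u k)) = c j i / fact (j+n) * (1 / (fact i * fact u * fact (i+u)))"
        by simp
    qed
    finally show ?thesis .
  qed
  have S1: "(\<Sum>k\<in>K. (-1::real) powi k * (phi l k * phi m k * phi n k * phi u k))
     = (\<Sum>j\<le>N. a j / fact (l+m) * (\<Sum>i\<le>N. c j i / fact (j+n) * (1 / (fact i * fact u * fact (i+u)))))"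
  proof -
    have "(\<Sum>k\<in>K. (-1::real) powi k * (phi l k * phi m k * phi n k * phi u k))
       = (\<Sum>k\<in>K. (-1::real) powi k * ((\<Sum>j\<le>N. phi j k * (a j / fact (l+m))) * (phi n k * phi u k)))"
    proof (intro sum.cong refl)
      fix k
      have "phi l k * phi m k = (\<Sum>j\<le>N. phi j k * (a j / fact (l+m)))"
      proof -
        have mN: "m \<le> N" by (simp add: N_def)
        show ?thesis unfolding P[OF mN, where a=l and k=k]
        by (simp add: N_def sum_divide_distrib a_def mult.assoc)
      qed
      then show "(-1::real) powi k * (phi l k * phi m k * phi n k * phi u k) = (-1::real) powi k * ((\<Sum>j\<le>N. phi j k * (a j / fact (l+m))) * (phi n k * phi u k))"
        by (simp add: mult.assoc[symmetric])
    qed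
    also have "\<dots> = (\<Sum>j\<le>N. a j / fact (l+m) * (\<Sum>k\<in>K. (-1::real) powi k * (phi j k * (phi n k * phi u k))))"
      by (rule swap_gen)
    also have "\<dots> = (\<Sum>j\<le>N. a j / fact (l+m) * (\<Sum>i\<le>N. c j i / fact (j+n) * (1 / (fact i * fact u * fact (i+u)))))"
      by (intro sum.cong refl) (simp add: inner)
    finally show ?thesis .
  qed
  define T where "T = (\<lambda>i::nat. fact (nat (int (l+m+n) - int i)) * inv_fact (int i) * inv_fact (int l - int i)
              * inv_fact (int m - int i) * inv_fact (int n - int i) * inv_fact (int u + int i))"
  have R: "(\<Sum>\<^sub>\<infinity>k::nat. fact (nat (int (l+m+n) - int k)) * inv_fact (int k) * inv_fact (int l - int k)
              * inv_fact (int m - int k) * inv_fact (int n - int k) * inv_fact (int u + int k))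
      = (\<Sum>i\<le>N. T i)"
    unfolding T_def by (rule infsum_nat_fin) (simp add: N_def inv_fact_diff0)
  have sw: "(\<Sum>j\<le>N. a j / fact (l+m) * (\<Sum>i\<le>N. c j i / fact (j+n) * (1 / (fact i * fact u * fact (i+u)))))
      = (\<Sum>i\<le>N. \<Sum>j\<le>N. a j / fact (l+m) * (c j i / fact (j+n) * (1 / (fact i * fact u * fact (i+u)))))"
    unfolding sum_distrib_left by (rule sum.swap)
  have per: "C1 * (\<Sum>j\<le>N. a j / fact (l+m) * (c j i / fact (j+n) * (1 / (fact i * fact u * fact (i+u)))))
      = fact (2*u) / fact u * T i" if i: "i \<le> N" for i
  proof -
    have "(\<Sum>j\<le>N. a j / fact (l+m) * (c j i / fact (j+n) * (1 / (fact i * fact u * fact (i+u)))))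
       = inv_fact (int n - int i) / (fact (l+m) * fact i * fact u * fact (i+u)) *
         (\<Sum>j\<le>N. inv_fact (int l - int j) * inv_fact (int m - int j) * inv_fact (int j - int i) / fact (j+n))"
      unfolding sum_distrib_left a_def c_def by (intro sum.cong refl) (simp add: field_simps)
    also have "\<dots> = inv_fact (int n - int i) / (fact (l+m) * fact i * fact u * fact (i+u)) *
        (fact (nat (int (l+m+n) - int i)) * inv_fact (int l - int i) * inv_fact (int m - int i) / (fact (l+n) * fact (m+n)))"
      by (subst V1) (simp_all add: N_def)
    finally have E: "(\<Sum>j\<le>N. a j / fact (l+m) * (c j i / fact (j+n) * (1 / (fact i * fact u * fact (i+u))))) = 
       inv_fact (int n - int i) / (fact (l+m) * fact i * fact u * fact (i+u)) *
        (fact (nat (int (l+m+n) - int i)) * inv_fact (int l - int i) * inv_fact (int m - int i) / (fact (l+n) * fact (m+n)))" .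
    have e2: "2*u = u+u" "n+l = l+n" "u+i = i+u" by simp_all
    show ?thesis unfolding E T_def C1_def e2 by (simp add: field_simps)
  qed
  have "(\<Sum>k\<in>K. C1 * ((-1::real) powi k * (phi l k * phi m k * phi n k * phi u k)))
     = C1 * (\<Sum>k\<in>K. (-1::real) powi k * (phi l k * phi m k * phi n k * phi u k))"
    by (rule sum_distrib_left[symmetric])
  also have "\<dots> = C1 * (\<Sum>i\<le>N. \<Sum>j\<le>N. a j / fact (l+m) * (c j i / fact (j+n) * (1 / (fact i * fact u * fact (i+u)))))"
    unfolding S1 sw ..
  also have "\<dots> = (\<Sum>i\<le>N. C1 * (\<Sum>j\<le>N. a j / fact (l+m) * (c j i / fact (j+n) * (1 / (fact i * fact u * fact (i+u))))))"
    by (rule sum_distrib_left)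
  also have "\<dots> = (\<Sum>i\<le>N. fact (2*u) / fact u * T i)"
    by (intro sum.cong refl, rule per) auto
  also have "\<dots> = fact (2*u) / fact u * (\<Sum>i\<le>N. T i)"
    by (rule sum_distrib_left[symmetric])
  finally show ?thesis unfolding L R .
qed

lemma part2:
  fixes m n u v :: nat
  shows "(\<Sum>\<^sub>\<infinity>k::int. (-1::real) powi k * binomz (m+n) (int m + k) * binomz (m+n) (int n + k)
            * binomz (u+v) (int u + k) * binomz (u+v) (int v + k))
         = real ((u+v) choose u) *
           (\<Sum>\<^sub>\<infinity>k::nat. fact (m+n) * fact (u+v+k) * inv_fact (int k) * inv_fact (int m - int k)
              * inv_fact (int n - int k) * inv_fact (int u + int k) * inv_fact (int v + int k))"
proof -
  define N where "N = m+n+u+v"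
  define K where "K = {-int N..int N}"
  define C2 :: real where "C2 = fact (m+n) * fact (m+n) * fact (u+v) * fact (u+v)"
  define a where "a = (\<lambda>j::nat. inv_fact (int m - int j) * inv_fact (int n - int j))"
  define b where "b = (\<lambda>i::nat. inv_fact (int u - int i) * inv_fact (int v - int i))"
  have pt: "(-1::real) powi k * binomz (m+n) (int m + k) * binomz (m+n) (int n + k)
            * binomz (u+v) (int u + k) * binomz (u+v) (int v + k)
        = C2 * ((-1::real) powi k * ((phi m k * phi n k) * (phi u k * phi v k)))" for k
  proof -
    have b2: "binomz (m+n) (int n + k) = fact (m+n) * inv_fact (int n + k) * inv_fact (int m - k)"
      using binomz_eq[of n m k] by (simp add: add.commute)
    have b4: "binomz (u+v) (int v + k) = fact (u+v) * inv_fact (int v + k) * inv_fact (int u - k)"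
      using binomz_eq[of v u k] by (simp add: add.commute)
    show ?thesis unfolding b2 b4 binomz_eq C2_def phi_def by (simp only: mult_ac)
  qed
  have L: "(\<Sum>\<^sub>\<infinity>k::int. (-1::real) powi k * binomz (m+n) (int m + k) * binomz (m+n) (int n + k)
            * binomz (u+v) (int u + k) * binomz (u+v) (int v + k))
       = (\<Sum>k\<in>K. C2 * ((-1::real) powi k * ((phi m k * phi n k) * (phi u k * phi v k))))"
    unfolding pt K_def
    by (rule infsum_int_fin) (auto simp: phi_zero N_def)
  have Puv: "phi u k * phi v k = (\<Sum>i\<le>N. phi i k * (b i / fact (u+v)))" for k
  proof -
    have vN: "v \<le> N" by (simp add: N_def)
    show ?thesis unfolding P[OF vN, where a=u and k=k]
      by (simp add: N_def sum_divide_distrib b_def mult.assoc)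
  qed
  have Pmn: "phi m k * phi n k = (\<Sum>j\<le>N. phi j k * (a j / fact (m+n)))" for k
  proof -
    have nN: "n \<le> N" by (simp add: N_def)
    show ?thesis unfolding P[OF nN, where a=m and k=k]
      by (simp add: N_def sum_divide_distrib a_def mult.assoc)
  qed
  have inner: "(\<Sum>k\<in>K. (-1::real) powi k * (phi j k * (phi u k * phi v k)))
      = (\<Sum>i\<le>N. b i / fact (u+v) * (1 / (fact i * fact j * fact (i+j))))" if j: "j \<le> N" for j
  proof -
    have "(\<Sum>k\<in>K. (-1::real) powi k * (phi j k * (phi u k * phi v k)))
       = (\<Sum>k\<in>K. (-1::real) powi k * ((\<Sum>i\<le>N. phi i k * (b i / fact (u+v))) * phi j k))"
      unfolding Puv by (simp only: mult_ac)
    also have "\<dots> = (\<Sum>i\<le>N. b i / fact (u+v) * (\<Sum>k\<in>K. (-1::real) powi k * (phi i k * phi j k)))"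
      by (rule swap_gen)
    also have "\<dots> = (\<Sum>i\<le>N. b i / fact (u+v) * (1 / (fact i * fact j * fact (i+j))))"
    proof (intro sum.cong refl)
      fix i assume "i \<in> {..N}"
      then have "(\<Sum>k\<in>K. (-1::real) powi k * (phi i k * phi j k)) = 1 / (fact i * fact j * fact (i+j))"
        unfolding K_def using j by (intro Bsum) auto
      then show "b i / fact (u+v) * (\<Sum>k\<in>K. (-1::real) powi k * (phi i k * phi j k)) = b i / fact (u+v) * (1 / (fact i * fact j * fact (i+j)))"
        by simp
    qed
    finally show ?thesis .
  qed
  have S2: "(\<Sum>k\<in>K. (-1::real) powi k * ((phi m k * phi n k) * (phi u k * phi v k)))
     = (\<Sum>j\<le>N. a j / fact (m+n) * (\<Sum>i\<le>N. b i / fact (u+v) * (1 / (fact i * fact j * fact (i+j)))))"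
  proof -
    have "(\<Sum>k\<in>K. (-1::real) powi k * ((phi m k * phi n k) * (phi u k * phi v k)))
       = (\<Sum>k\<in>K. (-1::real) powi k * ((\<Sum>j\<le>N. phi j k * (a j / fact (m+n))) * (phi u k * phi v k)))"
      unfolding Pmn ..
    also have "\<dots> = (\<Sum>j\<le>N. a j / fact (m+n) * (\<Sum>k\<in>K. (-1::real) powi k * (phi j k * (phi u k * phi v k))))"
      by (rule swap_gen)
    also have "\<dots> = (\<Sum>j\<le>N. a j / fact (m+n) * (\<Sum>i\<le>N. b i / fact (u+v) * (1 / (fact i * fact j * fact (i+j)))))"
      by (intro sum.cong refl) (simp add: inner)
    finally show ?thesis .
  qed
  define T where "T = (\<lambda>k::nat. fact (m+n) * fact (u+v+k) * inv_fact (int k) * inv_fact (int m - int k)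
              * inv_fact (int n - int k) * inv_fact (int u + int k) * inv_fact (int v + int k))"
  have R: "(\<Sum>\<^sub>\<infinity>k::nat. fact (m+n) * fact (u+v+k) * inv_fact (int k) * inv_fact (int m - int k)
              * inv_fact (int n - int k) * inv_fact (int u + int k) * inv_fact (int v + int k))
      = (\<Sum>j\<le>N. T j)"
    unfolding T_def by (rule infsum_nat_fin) (simp add: N_def inv_fact_diff0)
  have per: "C2 * (a j / fact (m+n) * (\<Sum>i\<le>N. b i / fact (u+v) * (1 / (fact i * fact j * fact (i+j)))))
      = real ((u+v) choose u) * T j" if j: "j \<le> N" for j
  proof -
    have "(\<Sum>i\<le>N. b i / fact (u+v) * (1 / (fact i * fact j * fact (i+j))))
       = 1 / (fact (u+v) * fact j) * (\<Sum>i\<le>N. inv_fact (int u - int i) * inv_fact (int v - int i) * inv_fact (int i)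
            * inv_fact (int j + int i))"
      unfolding sum_distrib_left b_def by (intro sum.cong refl) (simp add: field_simps add.commute)
    also have "\<dots> = 1 / (fact (u+v) * fact j) * (fact (u+v+j) / (fact u * fact v * fact (u+j) * fact (v+j)))"
      by (subst GV) (simp_all add: N_def)
    finally have E: "(\<Sum>i\<le>N. b i / fact (u+v) * (1 / (fact i * fact j * fact (i+j))))
       = 1 / (fact (u+v) * fact j) * (fact (u+v+j) / (fact u * fact v * fact (u+j) * fact (v+j)))" .
    have bc: "real ((u+v) choose u) = fact (u+v) / (fact u * fact v)"
      by (subst binomial_fact) simp_all
    show ?thesis unfolding E bc T_def C2_def a_def by (simp add: field_simps)
  qed
  have "(\<Sum>k\<in>K. C2 * ((-1::real) powi k * ((phi m k * phi n k) * (phi u k * phi v k))))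
     = C2 * (\<Sum>k\<in>K. (-1::real) powi k * ((phi m k * phi n k) * (phi u k * phi v k)))"
    by (rule sum_distrib_left[symmetric])
  also have "\<dots> = (\<Sum>j\<le>N. C2 * (a j / fact (m+n) * (\<Sum>i\<le>N. b i / fact (u+v) * (1 / (fact i * fact j * fact (i+j))))))"
    unfolding S2 by (rule sum_distrib_left)
  also have "\<dots> = (\<Sum>j\<le>N. real ((u+v) choose u) * T j)"
    by (intro sum.cong refl, rule per) auto
  also have "\<dots> = real ((u+v) choose u) * (\<Sum>j\<le>N. T j)"
    by (rule sum_distrib_left[symmetric])
  finally show ?thesis unfolding L R .
qed

theorem corollary5p9:
  fixes l m n u v :: nat
  shows "((\<Sum>\<^sub>\<infinity>k::int. (-1::real) powi k * binomz (l+m) (int l + k) * binomz (m+n) (int m + k)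
            * binomz (n+l) (int n + k) * binomz (2*u) (int u + k))
         = fact (2*u) / fact u *
           (\<Sum>\<^sub>\<infinity>k::nat. fact (nat (int (l+m+n) - int k)) * inv_fact (int k) * inv_fact (int l - int k)
              * inv_fact (int m - int k) * inv_fact (int n - int k) * inv_fact (int u + int k)))
    \<and> ((\<Sum>\<^sub>\<infinity>k::int. (-1::real) powi k * binomz (m+n) (int m + k) * binomz (m+n) (int n + k)
            * binomz (u+v) (int u + k) * binomz (u+v) (int v + k))
         = real ((u+v) choose u) *
           (\<Sum>\<^sub>\<infinity>k::nat. fact (m+n) * fact (u+v+k) * inv_fact (int k) * inv_fact (int m - int k)
              * inv_fact (int n - int k) * inv_fact (int u + int k) * inv_fact (int v + int k)))"
    using part1[of l m n u] part2[of m n u v] by blast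

end
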